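(* Let $n\ge4$, $k=3$, and let $d$ be an integer. Then every allowable critical data set for type $(n,d,3)$ satisfies $C_{12}>0$.
   Context: Let $0<k<n$ and $d$ be integers. Write $d=na-t$ with integers $a,t$, $0\le t<n$, and $ka=l(n-k)+t+m$ with integers $l,m$, $0\le m<n-k$. A critical data set for type $(n,d,k)$ is a tuple $A_c=(\alpha_c,n_1,d_1,k_1,n_2,d_2,k_2)$ with integers $n_i\ge1$, $k_i\ge0$, $d_i$ such that $n_1+n_2=n$, $d_1+d_2=d$, $k_1+k_2=k$, $\frac{d_2}{n_2}>\frac{d_1}{n_1}$, $\frac{k_1}{n_1}>\frac{k_2}{n_2}$, and $\alpha_c=\frac{d_2n_1-d_1n_2}{n_2k_1-n_1k_2}$. It is allowable if moreover $\frac tk<\alpha_c<\frac{ln+t}{k}$, $d\ge\frac1k(n^2-1)-(n-k)$, $d_1\ge\frac1{k_1}(n_1^2-1)-(n_1-k_1)$, and either ($k_2=0$ and $n_2=1$) or ($k_2\ge1$ and $d_2\ge\frac1{k_2}(n_2^2-1)-(n_2-k_2)$). Define $C_{12}=-n_1n_2-d_2n_1+d_1n_2+k_1(d_2+n_2-k_2)$. *)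

theory Defs
  imports Complex_Main
begin

definition par_a :: "int \<Rightarrow> int \<Rightarrow> int" where
  "par_a n d = - ((- d) div n)"
definition par_t :: "int \<Rightarrow> int \<Rightarrow> int" where
  "par_t n d = (- d) mod n"
(* k*a = l*(n-k) + t + m with 0 <= m < n-k *)
definition par_l :: "int \<Rightarrow> int \<Rightarrow> int \<Rightarrow> int" where
  "par_l n d k = (k * par_a n d - par_t n d) div (n - k)"
definition par_m :: "int \<Rightarrow> int \<Rightarrow> int \<Rightarrow> int" where
  "par_m n d k = (k * par_a n d - par_t n d) mod (n - k)"

lemma par_at: "n > 0 \<Longrightarrow> d = n * par_a n d - par_t n d \<and> 0 \<le> par_t n d \<and> par_t n d < n"
  unfolding par_a_def par_t_def
  by (smt (verit) minus_mult_div_eq_mod mult_minus_right pos_mod_bound pos_mod_sign)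

definition critical_data_set ::
  "int \<Rightarrow> int \<Rightarrow> int \<Rightarrow> real \<Rightarrow> int \<Rightarrow> int \<Rightarrow> int \<Rightarrow> int \<Rightarrow> int \<Rightarrow> int \<Rightarrow> bool" where
  "critical_data_set n d k \<alpha> n1 d1 k1 n2 d2 k2 \<longleftrightarrow>
     n1 \<ge> 1 \<and> n2 \<ge> 1 \<and> k1 \<ge> 0 \<and> k2 \<ge> 0 \<and>
     n1 + n2 = n \<and> d1 + d2 = d \<and> k1 + k2 = k \<and>
     real_of_int d2 / real_of_int n2 > real_of_int d1 / real_of_int n1 \<and>
     real_of_int k1 / real_of_int n1 > real_of_int k2 / real_of_int n2 \<and>
     \<alpha> = real_of_int (d2 * n1 - d1 * n2) / real_of_int (n2 * k1 - n1 * k2)"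

definition allowable ::
  "int \<Rightarrow> int \<Rightarrow> int \<Rightarrow> real \<Rightarrow> int \<Rightarrow> int \<Rightarrow> int \<Rightarrow> int \<Rightarrow> int \<Rightarrow> int \<Rightarrow> bool" where
  "allowable n d k \<alpha> n1 d1 k1 n2 d2 k2 \<longleftrightarrow>
     critical_data_set n d k \<alpha> n1 d1 k1 n2 d2 k2 \<and>
     real_of_int (par_t n d) / real_of_int k < \<alpha> \<and>
     \<alpha> < real_of_int (par_l n d k * n + par_t n d) / real_of_int k \<and>
     real_of_int d \<ge> (real_of_int n ^ 2 - 1) / real_of_int k - real_of_int (n - k) \<and>
     real_of_int d1 \<ge> (real_of_int n1 ^ 2 - 1) / real_of_int k1 - real_of_int (n1 - k1) \<and>
     ((k2 = 0 \<and> n2 = 1) \<or>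
      (k2 \<ge> 1 \<and> real_of_int d2 \<ge> (real_of_int n2 ^ 2 - 1) / real_of_int k2 - real_of_int (n2 - k2)))"

definition C12 :: "int \<Rightarrow> int \<Rightarrow> int \<Rightarrow> int \<Rightarrow> int \<Rightarrow> int \<Rightarrow> int" where
  "C12 n1 d1 k1 n2 d2 k2 = - n1 * n2 - d2 * n1 + d1 * n2 + k1 * (d2 + n2 - k2)"

end

theory Submission
  imports Defs
begin

lemma three_lt: "3*(A::int) < B \<Longrightarrow> 0 < B - 3*A" by simp
lemma three_lt3: "3*(A::int) < 3*B \<Longrightarrow> 0 < B - A" by simp

lemma caseA:
  fixes n d n1 d1 n2 d2 s m :: int
  assumes "n \<ge> 4" "n1 + n2 = n" "n2 = 1" "d1 + d2 = d"
    "d = (n-3)*s + m" "0 \<le> m"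
    "3*(d2*n1 - d1*n2) < 3*(3*s - m)"
  shows "C12 n1 d1 3 n2 d2 0 > 0"
proof -
  have n1: "n1 = n - 1" using assms by simp
  have d1e: "d1 = (n-3)*s + m - d2" using assms by simp
  have "n*(s - d2) = 3*s - m - (d2*n1 - d1*n2)"
    unfolding d1e n1 assms(3) by (simp add: algebra_simps)
  moreover have "3*s - m - (d2*n1 - d1*n2) > 0" using three_lt3[OF assms(7)] by simp
  ultimately have "0 < n*(s-d2)" by simp
  then have "0 < s - d2" using assms by (simp add: zero_less_mult_iff)
  then have "0 \<le> (n-3)*(s-d2-1)" using assms by simp
  moreover have "C12 n1 d1 3 n2 d2 0 = (n-3)*(s-d2-1) + m + 1"
    unfolding C12_def d1e n1 assms(3) by (simp add: algebra_simps)
  ultimately show ?thesis using assms by linarith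
qed

lemma caseB:
  fixes n d n1 d1 n2 d2 s m :: int
  assumes "n \<ge> 4" "n1 \<ge> 1" "n1 + n2 = n" "2*n1 < n2" "d1 + d2 = d"
    "d = (n-3)*s + m" "0 \<le> m"
    "3*(d2*n1 - d1*n2) < (n2 - 2*n1)*(3*s - m)"
    "2*d2 \<ge> n2^2 - 1 - 2*(n2-2)"
  shows "C12 n1 d1 1 n2 d2 2 > 0"
proof -
  define r where "r = d1 - (n1-1)*s"
  have d2e: "d2 = (n1+n2-3)*s + m - d1" using assms by simp
  have "n*(3*r - m) = (n2 - 2*n1)*(3*s - m) - 3*(d2*n1 - d1*n2)"
    unfolding r_def d2e assms(3)[symmetric] by (simp add: algebra_simps)
  moreover have "(n2 - 2*n1)*(3*s - m) - 3*(d2*n1 - d1*n2) > 0" using three_lt[OF assms(8)] by simp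
  ultimately have "0 < n*(3*r-m)" by simp
  then have rm: "0 < 3*r - m" using assms by (simp add: zero_less_mult_iff)
  define S1 where "S1 = 3*r-1-m"
  define S2 where "S2 = 2*d2 - (n2*n2-2*n2+3)"
  have S1: "S1 \<ge> 0" using rm S1_def by simp
  have S2: "S2 \<ge> 0" using assms(9) S2_def by (simp add: power2_eq_square algebra_simps)
  have r1: "r \<ge> 1" using rm assms by linarith
  have eq: "(n2-2)*C12 n1 d1 1 n2 d2 2 = (n1-1)*S2+(n1-1)*n2*S1+n2*(n2-2*n1)*(r-1)+(n2-2)*(n2-n1-1)+(n1-1)"
    unfolding C12_def S1_def S2_def r_def d2e by (simp add: algebra_simps)
  have p1: "(n1-1)*S2 \<ge> 0" using S2 assms by simp
  have p2: "(n1-1)*n2*S1 \<ge> 0" using S1 assms by simp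
  have p3: "n2*(n2-2*n1)*(r-1) \<ge> 0" using r1 assms by simp
  have p4: "(n2-2)*(n2-n1-1) > 0" using assms by (simp add: zero_less_mult_iff)
  have "(n2-2)*C12 n1 d1 1 n2 d2 2 > 0" using eq p1 p2 p3 p4 assms by linarith
  then show ?thesis using assms by (simp add: zero_less_mult_iff)
qed

lemma caseC:
  fixes n d n1 d1 n2 d2 s m :: int
  assumes "n \<ge> 4" "n1 \<ge> 1" "n1 + n2 = n" "n1 < 2*n2" "d1 + d2 = d"
    "d = (n-3)*s + m" "0 \<le> m" "m < n - 3"
    "3*(d2*n1 - d1*n2) < (2*n2 - n1)*(3*s - m)"
    "d2 \<ge> n2^2 - 1 - (n2-1)"
    "2*d1 \<ge> n1^2 - 1 - 2*(n1-2)"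
    "3*d \<ge> n^2 - 1 - 3*(n-3)"
  shows "C12 n1 d1 2 n2 d2 1 > 0"
proof -
  define r where "r = d1 - (n1-2)*s"
  have d2e: "d2 = (n1+n2-3)*s + m - d1" using assms by simp
  have "n*(3*r - 2*m) = (2*n2 - n1)*(3*s - m) - 3*(d2*n1 - d1*n2)"
    unfolding r_def d2e assms(3)[symmetric] by (simp add: algebra_simps)
  moreover have "(2*n2 - n1)*(3*s - m) - 3*(d2*n1 - d1*n2) > 0" using three_lt[OF assms(9)] by simp
  ultimately have "0 < n*(3*r-2*m)" by simp
  then have rm: "0 < 3*r - 2*m" using assms by (simp add: zero_less_mult_iff)
  have r1: "r \<ge> 1" using rm assms by linarith
  show ?thesis
  proof (cases "n1 = 1")
    case True
    then have "n2 \<ge> 3" using assms by simp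
    have "d1 \<ge> 1" using assms(11) True by simp
    then have "n2*d1 \<ge> n2" using \<open>n2 \<ge> 3\<close> by simp
    have "d2 \<ge> n2*n2 - n2" using assms(10) by (simp add: power2_eq_square)
    moreover have "n2*n2 \<ge> n2" using \<open>n2 \<ge> 3\<close> by simp
    moreover have "C12 n1 d1 2 n2 d2 1 = n2*d1 + d2 + n2 - 2"
      unfolding C12_def True by (simp add: algebra_simps)
    ultimately show ?thesis using \<open>n2*d1 \<ge> n2\<close> \<open>n2 \<ge> 3\<close> by linarith
  next
    case False
    then have n12: "n1 \<ge> 2" using assms by simp
    then have "n2 \<ge> 2" using assms by simp
    show ?thesis
    proof (cases "n2 = 2")
      case True
      then have "n1 = 2 \<or> n1 = 3" using assms n12 by linarith
      then show ?thesis
      proof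
        assume h: "n1 = 2"
        have "d1 \<ge> 2" using assms(11) h by simp
        then show ?thesis unfolding C12_def h True by simp
      next
        assume h: "n1 = 3"
        have n5: "n = 5" using h True assms by simp
        have "C12 n1 d1 2 n2 d2 1 = s + 3*r - m - 4"
          unfolding C12_def r_def d2e h True by (simp add: algebra_simps)
        moreover have "3*d \<ge> 18" using assms(12) n5 by simp
        moreover have "d = 2*s + m" using assms(6) n5 by simp
        ultimately show ?thesis using r1 assms(8) n5 by linarith
      qed
    next
      case False
      then have n23: "n2 \<ge> 3" using \<open>n2 \<ge> 2\<close> by simp
      define T1 where "T1 = 3*r-1-2*m"
      define T2 where "T2 = d2 - n2*(n2-1)"
      have T1: "T1 \<ge> 0" using rm T1_def by simp
      have T2: "T2 \<ge> 0" using assms(10) T2_def by (simp add: power2_eq_square algebra_simps)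
      have eq: "2*(n2-1)*C12 n1 d1 2 n2 d2 1 = 2*(n1-2)*T2+(n1-2)*n2*T1+n2*(2*n2-n1)*(r-1)+2*(n2-1)*(n2-2)"
        unfolding C12_def T1_def T2_def r_def d2e by (simp add: algebra_simps)
      have p1: "2*(n1-2)*T2 \<ge> 0" using T2 n12 by simp
      have p2: "(n1-2)*n2*T1 \<ge> 0" using T1 n12 assms by simp
      have p3: "n2*(2*n2-n1)*(r-1) \<ge> 0" using r1 assms by simp
      have p4: "2*(n2-1)*(n2-2) > 0" using n23 by (simp add: zero_less_mult_iff)
      have "2*(n2-1)*C12 n1 d1 2 n2 d2 1 > 0" using eq p1 p2 p3 p4 by linarith
      then show ?thesis using n23 by (simp add: zero_less_mult_iff)
    qed
  qed
qed



theorem proposition7p1: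
  fixes n d n1 d1 k1 n2 d2 k2 :: int and \<alpha> :: real
  assumes "n \<ge> 4"
    and "allowable n d 3 \<alpha> n1 d1 k1 n2 d2 k2"
  shows "C12 n1 d1 k1 n2 d2 k2 > 0"
proof -
  note A = assms(2)[unfolded allowable_def critical_data_set_def]
  have n1p: "n1 \<ge> 1" and n2p: "n2 \<ge> 1" and k1p: "k1 \<ge> 0" and k2p: "k2 \<ge> 0"
    and nsum: "n1 + n2 = n" and dsum: "d1 + d2 = d" and ksum: "k1 + k2 = 3"
    using A by auto
  have kfr: "real_of_int k2 / real_of_int n2 < real_of_int k1 / real_of_int n1" using A by auto
  have al: "\<alpha> = real_of_int (d2 * n1 - d1 * n2) / real_of_int (n2 * k1 - n1 * k2)" using A by auto
  have aup: "\<alpha> < real_of_int (par_l n d 3 * n + par_t n d) / real_of_int 3" using A by auto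
  have dlow: "real_of_int d \<ge> (real_of_int n ^ 2 - 1) / real_of_int 3 - real_of_int (n - 3)" using A by auto
  have d1low: "real_of_int d1 \<ge> (real_of_int n1 ^ 2 - 1) / real_of_int k1 - real_of_int (n1 - k1)" using A by auto
  have k2c: "(k2 = 0 \<and> n2 = 1) \<or>
      (k2 \<ge> 1 \<and> real_of_int d2 \<ge> (real_of_int n2 ^ 2 - 1) / real_of_int k2 - real_of_int (n2 - k2))"
    using A by auto
  have "real_of_int k2 * real_of_int n1 < real_of_int k1 * real_of_int n2"
    using kfr n1p n2p by (simp add: field_simps)
  then have ek: "k2 * n1 < k1 * n2" by (metis of_int_less_iff of_int_mult)
  define e where "e = n2 * k1 - n1 * k2"
  have epos: "e > 0" using ek unfolding e_def by (simp add: algebra_simps)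
  define a where "a = par_a n d"
  define t where "t = par_t n d"
  define l where "l = par_l n d 3"
  define m where "m = par_m n d 3"
  have hd: "d = n * a - t" using par_at[of n d] assms(1) unfolding a_def t_def by simp
  have lm: "l * (n-3) + m = 3*a - t" unfolding l_def m_def par_l_def par_m_def a_def t_def
    by (simp add: div_mult_mod_eq)
  have m0: "0 \<le> m" and m1: "m < n - 3" unfolding m_def par_m_def using assms(1) by simp_all
  define s where "s = a + l"
  have me: "m = 3*a - t - l*(n-3)" using lm by simp
  have ds: "d = (n-3)*s + m" unfolding me s_def hd by (simp add: algebra_simps)
  have lt: "l*n + t = 3*s - m" unfolding me s_def by (simp add: algebra_simps)
  have "real_of_int (d2 * n1 - d1 * n2) / real_of_int e < real_of_int (3*s - m) / 3"
    using aup al unfolding e_def lt[symmetric] l_def t_def by simp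
  then have "3 * real_of_int (d2 * n1 - d1 * n2) < real_of_int e * real_of_int (3*s - m)"
    using epos by (simp add: field_simps)
  then have up: "3 * (d2 * n1 - d1 * n2) < e * (3*s - m)"
    by (metis of_int_less_iff of_int_mult of_int_numeral)
  have "real_of_int (n^2 - 1 - 3*(n-3)) \<le> real_of_int (3*d)"
    using dlow by (simp add: field_simps)
  then have dl: "3*d \<ge> n^2 - 1 - 3*(n-3)" by linarith
  have k1pos: "k1 > 0"
  proof (rule ccontr)
    assume "\<not> k1 > 0"
    then have "k1 = 0" "k2 = 3" using k1p ksum by auto
    then show False using ek n1p by simp
  qed
  have "real_of_int (n1^2 - 1 - k1*(n1-k1)) \<le> real_of_int (k1*d1)"
    using d1low k1pos by (simp add: field_simps)
  then have d1l: "k1*d1 \<ge> n1^2 - 1 - k1*(n1-k1)" by linarith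
  have "k1 = 1 \<or> k1 = 2 \<or> k1 = 3" using k1pos ksum k2p by linarith
  then show ?thesis
  proof (elim disjE)
    assume h: "k1 = 1"
    then have h2: "k2 = 2" using ksum by simp
    have "real_of_int (n2^2 - 1 - 2*(n2-2)) \<le> real_of_int (2*d2)"
      using k2c h2 by (simp add: field_simps)
    then have "2*d2 \<ge> n2^2 - 1 - 2*(n2-2)" by linarith
    moreover have "2*n1 < n2" using ek h h2 by simp
    moreover have "3*(d2*n1 - d1*n2) < (n2 - 2*n1)*(3*s - m)" using up unfolding e_def h h2
      by (simp add: mult.commute)
    ultimately show ?thesis unfolding h h2
      using caseB[of n n1 n2 d1 d2 d s m] assms(1) n1p nsum dsum ds m0 by simp
  next
    assume h: "k1 = 2"
    then have h2: "k2 = 1" using ksum by simp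
    have "real_of_int (n2^2 - 1 - (n2-1)) \<le> real_of_int d2"
      using k2c h2 by (simp add: field_simps)
    then have "d2 \<ge> n2^2 - 1 - (n2-1)" by linarith
    moreover have "n1 < 2*n2" using ek h h2 by simp
    moreover have "3*(d2*n1 - d1*n2) < (2*n2 - n1)*(3*s - m)" using up unfolding e_def h h2
      by (simp add: algebra_simps)
    moreover have "2*d1 \<ge> n1^2 - 1 - 2*(n1-2)" using d1l h by simp
    ultimately show ?thesis unfolding h h2
      using caseC[of n n1 n2 d1 d2 d s m] assms(1) n1p nsum dsum ds m0 m1 dl by simp
  next
    assume h: "k1 = 3"
    then have h2: "k2 = 0" using ksum by simp
    then have "n2 = 1" using k2c by simp
    moreover have "3*(d2*n1 - d1*n2) < 3*(3*s - m)" using up \<open>n2 = 1\<close> unfolding e_def h h2 by simp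
    ultimately show ?thesis unfolding h h2
      using caseA[of n n1 n2 d1 d2 d s m] assms(1) nsum dsum ds m0 by simp
  qed
qed

end
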